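(* Let $p$ be a prime and $n \geq 2$. Let $N$ be the cyclic group of order $p^n$, let $K$ be the Sylow $p$-subgroup of $\mathrm{Aut}(N)$, and let $G := N \rtimes K$ (with the natural action). Then $|G:G'| = p^n$, and $|\gamma_i(G):\gamma_{i+1}(G)| = p$ for every $i = 2,\dots,n$.
   Context: $G'$ is the commutator subgroup of $G$, and $\gamma_i(G)$ denotes the $i$-th term of the lower central series, with $\gamma_1(G)=G$ and $\gamma_{i+1}(G)=[\gamma_i(G),G]$. *)

theory Defs
  imports "HOL-Algebra.Algebra" "HOL-Computational_Algebra.Primes"
begin

definition Zcyc :: "nat \<Rightarrow> nat monoid" where
  "Zcyc m = \<lparr>carrier = {0..<m}, monoid.mult = (\<lambda>a b. (a + b) mod m), monoid.one = 0\<rparr>"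

definition sdprod :: "('a, 'c) monoid_scheme \<Rightarrow> (('a \<Rightarrow> 'a), 'd) monoid_scheme
                      \<Rightarrow> ('a \<times> ('a \<Rightarrow> 'a)) monoid" where
  "sdprod N H = \<lparr>carrier = carrier N \<times> carrier H,
                 monoid.mult = (\<lambda>(a, f) (b, g). (a \<otimes>\<^bsub>N\<^esub> f b, f \<otimes>\<^bsub>H\<^esub> g)),
                 monoid.one = (\<one>\<^bsub>N\<^esub>, \<one>\<^bsub>H\<^esub>)\<rparr>"

text \<open>Lower central series, indexed from 1: gamma G 1 = G, gamma G (i+1) = [gamma G i, G].\<close>
fun lcs :: "('a, 'b) monoid_scheme \<Rightarrow> nat \<Rightarrow> 'a set" where
  "lcs G 0 = carrier G"
| "lcs G (Suc 0) = carrier G"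
| "lcs G (Suc (Suc i)) =
     generate G (\<Union>h \<in> lcs G (Suc i). \<Union>g \<in> carrier G.
                   {h \<otimes>\<^bsub>G\<^esub> g \<otimes>\<^bsub>G\<^esub> inv\<^bsub>G\<^esub> h \<otimes>\<^bsub>G\<^esub> inv\<^bsub>G\<^esub> g})"

end

theory Submission imports Defs "HOL-Number_Theory.Number_Theory" begin


lemma Zcyc_carrier[simp]: "carrier (Zcyc m) = {0..<m}"
  by (simp add: Zcyc_def)
lemma Zcyc_mult[simp]: "x \<otimes>\<^bsub>Zcyc m\<^esub> y = (x + y) mod m"
  by (simp add: Zcyc_def)
lemma Zcyc_one[simp]: "\<one>\<^bsub>Zcyc m\<^esub> = 0"
  by (simp add: Zcyc_def)

lemma Zcyc_group: assumes "m > 0" shows "group (Zcyc m)"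
proof (rule groupI)
  fix x assume "x \<in> carrier (Zcyc m)"
  then show "\<exists>y\<in>carrier (Zcyc m). y \<otimes>\<^bsub>Zcyc m\<^esub> x = \<one>\<^bsub>Zcyc m\<^esub>"
    using assms by (intro bexI[of _ "(m - x) mod m"]) (auto simp: mod_add_left_eq)
qed (use assms in \<open>auto simp: mod_simps add.assoc\<close>)

lemma auto_hom: assumes "f \<in> auto (Zcyc m)" "x < m" "y < m"
  shows "f ((x + y) mod m) = (f x + f y) mod m"
  using assms by (auto simp: auto_def hom_def)

lemma auto_range: assumes "f \<in> auto (Zcyc m)" "x < m" shows "f x < m"
  using assms by (auto simp: auto_def Bij_def bij_betw_def)

lemma auto_lin: assumes "f \<in> auto (Zcyc m)" "1 < m" "x < m"
  shows "f x = (f 1 * x) mod m"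
  using assms(3)
proof (induction x)
  case 0
  have "f ((0 + 0) mod m) = (f 0 + f 0) mod m" using auto_hom[OF assms(1), of 0 0] assms by auto
  moreover have "f 0 < m" using auto_range[OF assms(1)] assms by auto
  ultimately show ?case by (cases "f 0 + f 0 < m") (auto simp: le_mod_geq)
next
  case (Suc x)
  have "f ((x + 1) mod m) = (f x + f 1) mod m" using auto_hom[OF assms(1), of x 1] assms Suc by auto
  then show ?case using Suc assms by (simp add: mod_simps algebra_simps)
qed

lemma auto_ext: assumes "f \<in> auto (Zcyc m)" "1 < m"
  shows "f = (\<lambda>x\<in>{0..<m}. (f 1 * x) mod m)"
proof
  fix x show "f x = (\<lambda>x\<in>{0..<m}. (f 1 * x) mod m) x"
  proof (cases "x < m")
    case True then show ?thesis using auto_lin[OF assms] by simp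
  next
    case False
    have "f \<in> extensional {0..<m}" using assms by (auto simp: auto_def Bij_def)
    then show ?thesis using False by (simp add: extensional_def)
  qed
qed

lemma auto_unit: assumes "f \<in> auto (Zcyc m)" "1 < m"
  shows "f 1 < m" "coprime (f 1) m"
proof -
  show "f 1 < m" using auto_range[OF assms(1)] assms(2) by simp
  have "1 \<in> f ` {0..<m}" using assms by (auto simp: auto_def Bij_def bij_betw_def)
  then obtain x where "x < m" "f x = 1" by auto
  then have "(f 1 * x) mod m = 1" using auto_lin[OF assms] by simp
  then have "[f 1 * x = 1] (mod m)" using assms(2) by (simp add: cong_def)
  then show "coprime (f 1) m"
    using cong_imp_coprime[OF cong_sym] by (metis coprime_1_left coprime_mult_left_iff)
qed

lemma auto_mk: assumes "u < m" "coprime u m" "1 < m"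
  shows "(\<lambda>x\<in>{0..<m}. (u * x) mod m) \<in> auto (Zcyc m)"
proof -
  let ?f = "(\<lambda>x\<in>{0..<m}. (u * x) mod m)"
  have inj: "inj_on ?f {0..<m}"
  proof (rule inj_onI)
    fix x y assume xy: "x \<in> {0..<m}" "y \<in> {0..<m}" "?f x = ?f y"
    then have "[u * x = u * y] (mod m)" by (simp add: cong_def)
    then have "[x = y] (mod m)" using assms(2)
      by (metis cong_mult_lcancel_nat coprime_commute)
    then show "x = y" using xy by (simp add: cong_def)
  qed
  have sub: "?f ` {0..<m} \<subseteq> {0..<m}" using assms by auto
  have "?f ` {0..<m} = {0..<m}"
    using endo_inj_surj[OF _ sub inj] by simp
  then have "bij_betw ?f {0..<m} {0..<m}" using inj by (simp add: bij_betw_def)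
  moreover have "?f \<in> hom (Zcyc m) (Zcyc m)"
    using assms by (auto simp: hom_def mod_simps algebra_simps)
  ultimately show ?thesis by (simp add: auto_def Bij_def)
qed

lemma card_auto: assumes "1 < m" shows "card (auto (Zcyc m)) = totient m"
proof -
  have "bij_betw (\<lambda>f. f 1) (auto (Zcyc m)) {u. u < m \<and> coprime u m}"
  proof (rule bij_betwI[where g = "\<lambda>u. (\<lambda>x\<in>{0..<m}. (u * x) mod m)"])
    show "(\<lambda>f. f 1) \<in> auto (Zcyc m) \<rightarrow> {u. u < m \<and> coprime u m}"
      using auto_unit assms by auto
    show "(\<lambda>u. \<lambda>x\<in>{0..<m}. u * x mod m) \<in> {u. u < m \<and> coprime u m} \<rightarrow> auto (Zcyc m)"
      using auto_mk assms by auto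
    show "\<And>g. g \<in> auto (Zcyc m) \<Longrightarrow> (\<lambda>x\<in>{0..<m}. g 1 * x mod m) = g"
      using auto_ext assms by metis
    show "\<And>y. y \<in> {u. u < m \<and> coprime u m} \<Longrightarrow> (\<lambda>x\<in>{0..<m}. y * x mod m) 1 = y"
      using assms by auto
  qed
  then have "card (auto (Zcyc m)) = card {u. u < m \<and> coprime u m}" by (rule bij_betw_same_card)
  also have "{u. u < m \<and> coprime u m} = totatives m"
    using assms by (auto simp: totatives_def intro!: Nat.gr0I dest: le_neq_implies_less)
  finally show ?thesis by (simp add: totient_def)
qed




lemma fermat1: assumes "Factorial_Ring.prime (p::nat)" shows "[y ^ p = y] (mod p)"
proof (cases "p dvd y")
  case True
  then have "[y = 0] (mod p)" by (simp add: cong_0_iff)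
  moreover then have "[y ^ p = 0 ^ p] (mod p)" by (rule cong_pow)
  ultimately show ?thesis using assms prime_gt_0_nat
    by (metis cong_sym cong_trans power_0_left not_gr0)
next
  case False
  have "[y ^ (p - 1) = 1] (mod p)" using fermat_theorem[OF assms False] .
  then have "[y * y ^ (p - 1) = y * 1] (mod p)" by (rule cong_scalar_left)
  moreover have "y * y ^ (p - 1) = y ^ p" using assms prime_gt_0_nat
    by (metis Suc_diff_1 power_Suc)
  ultimately show ?thesis by simp
qed

lemma fermat_pow: assumes "Factorial_Ring.prime (p::nat)" shows "[y ^ (p ^ e) = y] (mod p)"
proof (induction e)
  case 0 then show ?case by simp
next
  case (Suc e)
  have "y ^ (p ^ Suc e) = (y ^ (p ^ e)) ^ p" by (metis power_Suc2 power_mult)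
  also have "[\<dots> = y ^ (p ^ e)] (mod p)" by (rule fermat1[OF assms])
  finally show ?case using Suc by (rule cong_trans)
qed

locale LS =
  fixes p n :: nat and K :: "(nat \<Rightarrow> nat) set"
  assumes prime: "Factorial_Ring.prime p" and n2: "n \<ge> 2"
    and sub: "subgroup K (AutoGroup (Zcyc (p ^ n)))"
    and cardK0: "card K = p ^ multiplicity p (order (AutoGroup (Zcyc (p ^ n))))"
begin

abbreviation "m \<equiv> p ^ n"
abbreviation "A \<equiv> AutoGroup (Zcyc m)"

lemma p2: "p \<ge> 2" using prime prime_ge_2_nat by blast

lemma m_gt1: "1 < m"
proof -
  have "p ^ 2 \<le> p ^ n" using power_increasing n2 p2 by simp
  moreover have "4 \<le> p ^ 2" using p2 power_mono[of 2 p 2] by simp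
  ultimately show ?thesis by simp
qed

lemma m0: "0 < m" using m_gt1 by linarith

lemma grpA: "group A"
proof -
  have "0 < m" using p2 by simp
  then show ?thesis by (rule group.AutoGroup[OF Zcyc_group])
qed

lemma carrier_A[simp]: "carrier A = auto (Zcyc m)"
  by (simp add: AutoGroup_def)

lemma one_A: "\<one>\<^bsub>A\<^esub> = (\<lambda>x\<in>{0..<m}. x)"
  by (simp add: AutoGroup_def BijGroup_def)

lemma mult_A: "f \<in> auto (Zcyc m) \<Longrightarrow> g \<in> auto (Zcyc m) \<Longrightarrow> f \<otimes>\<^bsub>A\<^esub> g = compose {0..<m} f g"
  by (simp add: AutoGroup_def BijGroup_def auto_def)

lemma K_sub: "K \<subseteq> auto (Zcyc m)"
  using subgroup.subset[OF sub] by simp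

lemma K_closed: "f \<in> K \<Longrightarrow> g \<in> K \<Longrightarrow> f \<otimes>\<^bsub>A\<^esub> g \<in> K"
  using subgroup.m_closed[OF sub] by blast

lemma K_one: "\<one>\<^bsub>A\<^esub> \<in> K"
  using subgroup.one_closed[OF sub] .

lemma K_inv: "f \<in> K \<Longrightarrow> inv\<^bsub>A\<^esub> f \<in> K"
  using subgroup.m_inv_closed[OF sub] by blast

lemma K_app: "f \<in> K \<Longrightarrow> g \<in> K \<Longrightarrow> x < m \<Longrightarrow> (f \<otimes>\<^bsub>A\<^esub> g) x = f (g x)"
proof -
  assume a: "f \<in> K" "g \<in> K" "x < m"
  then have "f \<otimes>\<^bsub>A\<^esub> g = compose {0..<m} f g" using K_sub mult_A by auto
  then show ?thesis using a by (simp add: compose_def)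
qed

lemma K_lin: "f \<in> K \<Longrightarrow> x < m \<Longrightarrow> f x = (f 1 * x) mod m"
  using K_sub auto_lin m_gt1 by blast

lemma K_range: "f \<in> K \<Longrightarrow> x < m \<Longrightarrow> f x < m"
  using K_sub auto_range by blast

lemma K_mul1: "f \<in> K \<Longrightarrow> g \<in> K \<Longrightarrow> (f \<otimes>\<^bsub>A\<^esub> g) 1 = (f 1 * g 1) mod m"
  using K_app[of f g 1] K_lin[of f "g 1"] K_range[of g 1] m_gt1 by simp

lemma K_ext: "f \<in> K \<Longrightarrow> f = (\<lambda>x\<in>{0..<m}. (f 1 * x) mod m)"
  using K_sub auto_ext m_gt1 by blast

lemma K_comm: "f \<in> K \<Longrightarrow> g \<in> K \<Longrightarrow> f \<otimes>\<^bsub>A\<^esub> g = g \<otimes>\<^bsub>A\<^esub> f"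
  using K_ext[OF K_closed[of f g]] K_ext[OF K_closed[of g f]] K_mul1[of f g] K_mul1[of g f]
  by (simp add: mult.commute)

lemma one_A_app: "x < m \<Longrightarrow> \<one>\<^bsub>A\<^esub> x = x"
  by (simp add: one_A)

lemma K_pow: "f \<in> K \<Longrightarrow> (f [^]\<^bsub>A\<^esub> (k::nat)) 1 = (f 1) ^ k mod m"
proof (induction k)
  case 0
  have "(f [^]\<^bsub>A\<^esub> (0::nat)) 1 = 1" using one_A_app[OF m_gt1] by (simp only: nat_pow_0)
  moreover have "(f 1) ^ 0 mod m = 1" using mod_less[OF m_gt1] by (simp only: power_0)
  ultimately show ?case by (simp only:)
next
  case (Suc k)
  have gK: "group (A\<lparr>carrier := K\<rparr>)" using group.subgroup_imp_group[OF grpA sub] .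
  have "f [^]\<^bsub>A\<lparr>carrier := K\<rparr>\<^esub> k \<in> carrier (A\<lparr>carrier := K\<rparr>)"
    using Suc.prems monoid.nat_pow_closed[OF group.is_monoid[OF gK]] by simp
  then have fk: "f [^]\<^bsub>A\<^esub> k \<in> K" by (simp add: nat_pow_def)
  have "f [^]\<^bsub>A\<^esub> Suc k = f [^]\<^bsub>A\<^esub> k \<otimes>\<^bsub>A\<^esub> f"
    by (rule monoid.nat_pow_Suc[OF group.is_monoid[OF grpA]])
  then have "(f [^]\<^bsub>A\<^esub> Suc k) 1 = ((f [^]\<^bsub>A\<^esub> k) 1 * f 1) mod m"
    using K_mul1[OF fk Suc.prems] by simp
  also have "\<dots> = ((f 1 ^ k mod m) * f 1) mod m" using Suc.IH Suc.prems by simp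
  also have "\<dots> = f 1 ^ Suc k mod m" by (metis mod_mult_left_eq power_Suc2)
  finally show ?case .
qed

lemma order_A: "order A = p ^ (n - 1) * (p - 1)"
  using card_auto[OF m_gt1] totient_prime_power[OF prime] n2 by (simp add: order_def)

lemma cardK: "card K = p ^ (n - 1)"
proof -
  have "\<not> p dvd (p - 1)" using p2
    by (metis One_nat_def diff_less dvd_imp_le less_le_trans nat_less_le one_less_numeral_iff
        semiring_norm(76) zero_less_diff zero_less_one)
  then have "multiplicity p ((p - 1) * p ^ (n - 1)) = multiplicity p (p ^ (n - 1))"
    using prime by (intro multiplicity_prime_elem_times_other) auto
  also have "\<dots> = n - 1" using prime by simp
  finally show ?thesis using cardK0 order_A by (simp add: mult.commute)
qed

lemma finK: "finite K"
proof -
  have "p ^ (n - 1) > 0" using p2 by (intro zero_less_power) linarith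
  then have "card K > 0" unfolding cardK .
  then show ?thesis by (rule card_ge_0_finite)
qed

lemma K_cong1: assumes "f \<in> K" shows "[f 1 = 1] (mod p)"
proof -
  let ?KG = "A\<lparr>carrier := K\<rparr>"
  have gK: "group ?KG" using group.subgroup_imp_group[OF grpA sub] .
  have fK: "f \<in> carrier ?KG" using assms by simp
  have o: "order ?KG = p ^ (n - 1)" using cardK by (simp add: order_def)
  have "f [^]\<^bsub>A\<^esub> (p ^ (n - 1)) = f [^]\<^bsub>?KG\<^esub> (p ^ (n - 1))"
    by (rule monoid.nat_pow_consistent[OF group.is_monoid[OF grpA]])
  also have "\<dots> = f [^]\<^bsub>?KG\<^esub> order ?KG" by (simp only: o)
  also have "\<dots> = \<one>\<^bsub>?KG\<^esub>" by (rule group.pow_order_eq_1[OF gK fK])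
  also have "\<dots> = \<one>\<^bsub>A\<^esub>" by simp
  finally have h: "f [^]\<^bsub>A\<^esub> (p ^ (n - 1)) = \<one>\<^bsub>A\<^esub>" .
  have "(f [^]\<^bsub>A\<^esub> (p ^ (n - 1))) 1 = 1" unfolding h using one_A_app[of 1] m_gt1 by simp
  then have "(f 1) ^ (p ^ (n - 1)) mod m = 1" using K_pow[OF assms, of "p ^ (n - 1)"] by simp
  then have "[(f 1) ^ (p ^ (n - 1)) = 1] (mod m)" by (simp only: cong_def mod_less[OF m_gt1])
  moreover have "p dvd m" using n2 by (simp add: dvd_power)
  ultimately have "[(f 1) ^ (p ^ (n - 1)) = 1] (mod p)"
    by (rule cong_dvd_modulus_nat)
  moreover have "[(f 1) ^ (p ^ (n - 1)) = f 1] (mod p)" using fermat_pow[OF prime] .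
  ultimately show ?thesis using cong_trans cong_sym by blast
qed


lemma K_nontriv: "\<exists>g\<in>K. \<not> [g 1 = 1] (mod p ^ 2)"
proof (rule ccontr)
  assume "\<not> (\<exists>g\<in>K. \<not> [g 1 = 1] (mod p ^ 2))"
  then have h: "\<And>g. g \<in> K \<Longrightarrow> [g 1 = 1] (mod p ^ 2)" by auto
  have p2gt: "1 < p ^ 2" using p2 power_mono[of 2 p 2] by simp
  have hm: "g 1 mod p ^ 2 = 1" if "g \<in> K" for g
  proof -
    have "g 1 mod p ^ 2 = 1 mod p ^ 2" using h[OF that] unfolding cong_def .
    then show ?thesis using mod_less[OF p2gt] by simp
  qed
  have meq: "m = p ^ 2 * p ^ (n - 2)" using n2 by (metis le_add_diff_inverse power_add)
  have inj: "inj_on (\<lambda>g. g 1 div p ^ 2) K"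
  proof (rule inj_onI)
    fix f g assume fg: "f \<in> K" "g \<in> K" "f 1 div p ^ 2 = g 1 div p ^ 2"
    have "f 1 = p ^ 2 * (f 1 div p ^ 2) + f 1 mod p ^ 2" by simp
    also have "\<dots> = p ^ 2 * (g 1 div p ^ 2) + g 1 mod p ^ 2" using fg hm by simp
    also have "\<dots> = g 1" by simp
    finally have "f 1 = g 1" .
    then show "f = g" using K_ext[OF fg(1)] K_ext[OF fg(2)] by simp
  qed
  have sub2: "(\<lambda>g. g 1 div p ^ 2) ` K \<subseteq> {0..<p ^ (n - 2)}"
  proof
    fix x assume "x \<in> (\<lambda>g. g 1 div p ^ 2) ` K"
    then obtain g where g: "g \<in> K" "x = g 1 div p ^ 2" by auto
    have "g 1 < p ^ 2 * p ^ (n - 2)" using K_range[OF g(1) m_gt1] meq by simp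
    then show "x \<in> {0..<p ^ (n - 2)}" using g(2) p2gt
      by (simp add: less_mult_imp_div_less mult.commute)
  qed
  have "card K \<le> p ^ (n - 2)"
    using card_inj_on_le[OF inj sub2] by simp
  moreover have "p ^ (n - 2) < p ^ (n - 1)"
    using p2 n2 by (intro power_strict_increasing) auto
  ultimately show False using cardK by simp
qed

abbreviation "G \<equiv> sdprod (Zcyc m) (A\<lparr>carrier := K\<rparr>)"

lemma carrier_G: "carrier G = {0..<m} \<times> K"
  by (simp add: sdprod_def)

lemma mult_G: "(a, f) \<otimes>\<^bsub>G\<^esub> (b, g) = ((a + f b) mod m, f \<otimes>\<^bsub>A\<^esub> g)"
  by (simp add: sdprod_def)

lemma one_G: "\<one>\<^bsub>G\<^esub> = (0, \<one>\<^bsub>A\<^esub>)"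
  by (simp add: sdprod_def)

lemma mA: "monoid A" by (rule group.is_monoid[OF grpA])

lemma grpG: "group G"
proof (rule groupI)
  fix x y assume xy: "x \<in> carrier G" "y \<in> carrier G"
  obtain a f where x: "x = (a, f)" by (cases x)
  obtain b g where y: "y = (b, g)" by (cases y)
  show "x \<otimes>\<^bsub>G\<^esub> y \<in> carrier G"
    using xy m0 K_closed by (auto simp: x y mult_G carrier_G)
next
  show "\<one>\<^bsub>G\<^esub> \<in> carrier G" using m0 K_one by (simp add: one_G carrier_G)
next
  fix x y z assume xyz: "x \<in> carrier G" "y \<in> carrier G" "z \<in> carrier G"
  obtain a f where x: "x = (a, f)" by (cases x)
  obtain b g where y: "y = (b, g)" by (cases y)
  obtain c h where z: "z = (c, h)" by (cases z)
  have a: "a < m" "f \<in> K" "b < m" "g \<in> K" "c < m" "h \<in> K"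
    using xyz by (auto simp: x y z carrier_G)
  have e1: "(f \<otimes>\<^bsub>A\<^esub> g) c = f (g c)" using K_app a by simp
  have gc: "g c < m" using K_range a by simp
  have e2: "f ((b + g c) mod m) = (f b + f (g c)) mod m"
    using auto_hom[of f m b "g c"] K_sub a gc by auto
  have e3: "f \<otimes>\<^bsub>A\<^esub> g \<otimes>\<^bsub>A\<^esub> h = f \<otimes>\<^bsub>A\<^esub> (g \<otimes>\<^bsub>A\<^esub> h)"
    using monoid.m_assoc[OF mA] K_sub a by auto
  have e4: "((a + f b) mod m + f (g c)) mod m = (a + (f b + f (g c)) mod m) mod m"
    by (simp add: mod_simps add.assoc)
  show "x \<otimes>\<^bsub>G\<^esub> y \<otimes>\<^bsub>G\<^esub> z = x \<otimes>\<^bsub>G\<^esub> (y \<otimes>\<^bsub>G\<^esub> z)"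
    by (simp only: x y z mult_G e1 e2 e3 e4)
next
  fix x assume xc: "x \<in> carrier G"
  obtain a f where x: "x = (a, f)" by (cases x)
  have a: "a < m" "f \<in> K" using xc by (auto simp: x carrier_G)
  have "\<one>\<^bsub>A\<^esub> \<otimes>\<^bsub>A\<^esub> f = f" using monoid.l_one[OF mA] K_sub a by auto
  then show "\<one>\<^bsub>G\<^esub> \<otimes>\<^bsub>G\<^esub> x = x" using a one_A_app by (simp add: x one_G mult_G)
next
  fix x assume xc: "x \<in> carrier G"
  obtain a f where x: "x = (a, f)" by (cases x)
  have a: "a < m" "f \<in> K" using xc by (auto simp: x carrier_G)
  let ?g = "inv\<^bsub>A\<^esub> f"
  have gK: "?g \<in> K" using K_inv a by simp
  have ga: "?g a < m" using K_range gK a by simp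
  have "?g \<otimes>\<^bsub>A\<^esub> f = \<one>\<^bsub>A\<^esub>" using group.l_inv[OF grpA] K_sub a by auto
  moreover have "((m - ?g a) mod m + ?g a) mod m = 0"
    using ga by (simp add: mod_add_left_eq)
  ultimately have "((m - ?g a) mod m, ?g) \<otimes>\<^bsub>G\<^esub> x = \<one>\<^bsub>G\<^esub>"
    by (simp add: x mult_G one_G)
  moreover have "((m - ?g a) mod m, ?g) \<in> carrier G"
    using gK m0 by (simp add: carrier_G)
  ultimately show "\<exists>y\<in>carrier G. y \<otimes>\<^bsub>G\<^esub> x = \<one>\<^bsub>G\<^esub>" by blast
qed

lemma G_div:
  assumes z: "z \<in> carrier G" and w: "w \<in> carrier G" and e: "snd z = snd w"
  shows "z \<otimes>\<^bsub>G\<^esub> inv\<^bsub>G\<^esub> w = ((fst z + m - fst w) mod m, \<one>\<^bsub>A\<^esub>)"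
proof -
  let ?s = "((fst z + m - fst w) mod m, \<one>\<^bsub>A\<^esub>)"
  have zz: "fst z < m" "snd z \<in> K" using z by (auto simp: carrier_G)
  have ww: "fst w < m" "snd w \<in> K" using w by (auto simp: carrier_G)
  have sc: "?s \<in> carrier G" using m0 K_one by (simp add: carrier_G)
  have "\<one>\<^bsub>A\<^esub> \<otimes>\<^bsub>A\<^esub> snd w = snd w" using monoid.l_one[OF mA] K_sub ww by auto
  moreover have "((fst z + m - fst w) mod m + fst w) mod m = fst z"
  proof -
    have "((fst z + m - fst w) mod m + fst w) mod m = (fst z + m - fst w + fst w) mod m"
      by (simp add: mod_add_left_eq)
    also have "fst z + m - fst w + fst w = fst z + m" using ww by simp
    finally show ?thesis using zz by simp
  qed
  ultimately have "?s \<otimes>\<^bsub>G\<^esub> w = z"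
    using one_A_app ww e by (cases w, cases z) (simp add: mult_G)
  then have "z \<otimes>\<^bsub>G\<^esub> inv\<^bsub>G\<^esub> w = ?s \<otimes>\<^bsub>G\<^esub> w \<otimes>\<^bsub>G\<^esub> inv\<^bsub>G\<^esub> w" by simp
  also have "\<dots> = ?s"
    using sc w by (simp add: group.r_inv[OF grpG] monoid.m_assoc[OF group.is_monoid[OF grpG]]
        group.inv_closed[OF grpG] monoid.r_one[OF group.is_monoid[OF grpG]])
  finally show ?thesis .
qed

lemma G_comm:
  assumes x: "x \<in> carrier G" and y: "y \<in> carrier G"
  shows "x \<otimes>\<^bsub>G\<^esub> y \<otimes>\<^bsub>G\<^esub> inv\<^bsub>G\<^esub> x \<otimes>\<^bsub>G\<^esub> inv\<^bsub>G\<^esub> y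
       = ((fst (x \<otimes>\<^bsub>G\<^esub> y) + m - fst (y \<otimes>\<^bsub>G\<^esub> x)) mod m, \<one>\<^bsub>A\<^esub>)"
proof -
  have xy: "x \<otimes>\<^bsub>G\<^esub> y \<in> carrier G" "y \<otimes>\<^bsub>G\<^esub> x \<in> carrier G"
    using x y group.subgroupE(4)[OF grpG group.subgroup_self[OF grpG]] by auto
  have "x \<otimes>\<^bsub>G\<^esub> y \<otimes>\<^bsub>G\<^esub> inv\<^bsub>G\<^esub> x \<otimes>\<^bsub>G\<^esub> inv\<^bsub>G\<^esub> y
       = x \<otimes>\<^bsub>G\<^esub> y \<otimes>\<^bsub>G\<^esub> inv\<^bsub>G\<^esub> (y \<otimes>\<^bsub>G\<^esub> x)"
    using x y by (simp add: group.inv_mult_group[OF grpG] monoid.m_assoc[OF group.is_monoid[OF grpG]]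
        group.inv_closed[OF grpG] monoid.m_closed[OF group.is_monoid[OF grpG]])
  also have "\<dots> = ((fst (x \<otimes>\<^bsub>G\<^esub> y) + m - fst (y \<otimes>\<^bsub>G\<^esub> x)) mod m, \<one>\<^bsub>A\<^esub>)"
  proof (rule G_div[OF xy])
    obtain a f where xx: "x = (a, f)" by (cases x)
    obtain b g where yy: "y = (b, g)" by (cases y)
    have "f \<in> K" "g \<in> K" using x y by (auto simp: xx yy carrier_G)
    then show "snd (x \<otimes>\<^bsub>G\<^esub> y) = snd (y \<otimes>\<^bsub>G\<^esub> x)"
      using K_comm by (simp add: xx yy mult_G)
  qed
  finally show ?thesis .
qed

lemma int_mod_eq: "int (x mod k) = int x - int k * int (x div k)"
proof -
  have "x = x mod k + k * (x div k)" by simp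
  then have "int x = int (x mod k) + int k * int (x div k)" by (metis of_nat_add of_nat_mult)
  then show ?thesis by linarith
qed

lemma comm_cong:
  assumes a: "a < m" "f \<in> K" "b < m" "g \<in> K"
  shows "\<exists>c. (a, f) \<otimes>\<^bsub>G\<^esub> (b, g) \<otimes>\<^bsub>G\<^esub> inv\<^bsub>G\<^esub> (a, f) \<otimes>\<^bsub>G\<^esub> inv\<^bsub>G\<^esub> (b, g) = (c, \<one>\<^bsub>A\<^esub>)
     \<and> c < m \<and> [int c = int a * (1 - int (g 1)) + int b * (int (f 1) - 1)] (mod int m)"
proof -
  have xc: "(a, f) \<in> carrier G" "(b, g) \<in> carrier G" using a by (auto simp: carrier_G)
  define X1 where "X1 = a + f b"
  define X2 where "X2 = b + g a"
  define X3 where "X3 = X1 mod m + m - X2 mod m"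
  define c where "c = X3 mod m"
  have eq: "(a, f) \<otimes>\<^bsub>G\<^esub> (b, g) \<otimes>\<^bsub>G\<^esub> inv\<^bsub>G\<^esub> (a, f) \<otimes>\<^bsub>G\<^esub> inv\<^bsub>G\<^esub> (b, g) = (c, \<one>\<^bsub>A\<^esub>)"
    using G_comm[OF xc] by (simp add: mult_G c_def X3_def X1_def X2_def)
  have clt: "c < m" using m0 by (simp add: c_def)
  have e1: "int c = int X3 - int m * int (X3 div m)" by (simp add: c_def int_mod_eq)
  have "X2 mod m < m" using m0 by simp
  then have e2: "int X3 = int (X1 mod m) + int m - int (X2 mod m)" by (simp add: X3_def)
  have e3: "int (X1 mod m) = int a + int (f b) - int m * int (X1 div m)"
    by (simp add: int_mod_eq X1_def)
  have e4: "int (X2 mod m) = int b + int (g a) - int m * int (X2 div m)"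
    by (simp add: int_mod_eq X2_def)
  have e5: "int (f b) = int (f 1) * int b - int m * int ((f 1 * b) div m)"
    using K_lin[OF a(2) a(3)] int_mod_eq[of "f 1 * b" m] by simp
  have e6: "int (g a) = int (g 1) * int a - int m * int ((g 1 * a) div m)"
    using K_lin[OF a(4) a(1)] int_mod_eq[of "g 1 * a" m] by simp
  have "int c - (int a * (1 - int (g 1)) + int b * (int (f 1) - 1))
      = int m * (1 - int (X3 div m) - int (X1 div m) + int (X2 div m)
                 - int ((f 1 * b) div m) + int ((g 1 * a) div m))"
    unfolding e1 e2 e3 e4 e5 e6 by (simp add: algebra_simps)
  then have "[int c = int a * (1 - int (g 1)) + int b * (int (f 1) - 1)] (mod int m)"
    unfolding cong_iff_dvd_diff by (metis dvd_triv_left)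
  then show ?thesis using eq clt by blast
qed

abbreviation "S j \<equiv> {a. a < m \<and> p ^ j dvd a} \<times> {\<one>\<^bsub>A\<^esub>}"

lemma mG: "monoid G" by (rule group.is_monoid[OF grpG])

lemma S_sub: assumes "j \<le> n" shows "subgroup (S j) G"
proof (rule group.subgroupI[OF grpG])
  have pm: "p ^ j dvd m" using assms by (rule le_imp_power_dvd)
  show "S j \<subseteq> carrier G" using K_one by (auto simp: carrier_G)
  have "(0, \<one>\<^bsub>A\<^esub>) \<in> S j" using m0 by simp
  then show "S j \<noteq> {}" by blast
  fix x assume x: "x \<in> S j"
  then obtain a where xa: "x = (a, \<one>\<^bsub>A\<^esub>)" "a < m" "p ^ j dvd a" by auto
  have xc: "x \<in> carrier G" using x K_one by (auto simp: carrier_G)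
  have oc: "\<one>\<^bsub>G\<^esub> \<in> carrier G" by (rule monoid.one_closed[OF mG])
  have "inv\<^bsub>G\<^esub> x = \<one>\<^bsub>G\<^esub> \<otimes>\<^bsub>G\<^esub> inv\<^bsub>G\<^esub> x"
    using monoid.l_one[OF mG group.inv_closed[OF grpG xc]] by simp
  also have "\<dots> = ((0 + m - a) mod m, \<one>\<^bsub>A\<^esub>)"
    using G_div[OF oc xc] xa by (simp add: one_G)
  finally have ix: "inv\<^bsub>G\<^esub> x = ((m - a) mod m, \<one>\<^bsub>A\<^esub>)" by simp
  have "p ^ j dvd m - a" using pm xa by (simp add: dvd_diff_nat)
  then have "p ^ j dvd (m - a) mod m" using pm by (simp add: dvd_mod)
  then show "inv\<^bsub>G\<^esub> x \<in> S j" using ix m0 by simp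
next
  have pm: "p ^ j dvd m" using assms by (rule le_imp_power_dvd)
  fix x y assume x: "x \<in> S j" and y: "y \<in> S j"
  then obtain a b where xa: "x = (a, \<one>\<^bsub>A\<^esub>)" "a < m" "p ^ j dvd a"
    and yb: "y = (b, \<one>\<^bsub>A\<^esub>)" "b < m" "p ^ j dvd b" by auto
  have oo: "\<one>\<^bsub>A\<^esub> \<otimes>\<^bsub>A\<^esub> \<one>\<^bsub>A\<^esub> = \<one>\<^bsub>A\<^esub>" by (rule monoid.l_one[OF mA monoid.one_closed[OF mA]])
  have "x \<otimes>\<^bsub>G\<^esub> y = ((a + b) mod m, \<one>\<^bsub>A\<^esub>)"
    using xa yb oo one_A_app by (simp add: mult_G)
  moreover have "p ^ j dvd (a + b) mod m" using xa yb pm by (simp add: dvd_mod)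
  ultimately show "x \<otimes>\<^bsub>G\<^esub> y \<in> S j" using m0 by simp
qed

lemma S_card: assumes "j \<le> n" shows "card (S j) = p ^ (n - j)"
proof -
  have pj: "p ^ j > 0" using p2 by simp
  have meq: "m = p ^ j * p ^ (n - j)" using assms by (metis le_add_diff_inverse power_add)
  have "{a. a < m \<and> p ^ j dvd a} = (\<lambda>k. p ^ j * k) ` {0..<p ^ (n - j)}"
  proof
    show "{a. a < m \<and> p ^ j dvd a} \<subseteq> (\<lambda>k. p ^ j * k) ` {0..<p ^ (n - j)}"
    proof
      fix a assume "a \<in> {a. a < m \<and> p ^ j dvd a}"
      then have a: "a < p ^ j * p ^ (n - j)" "p ^ j dvd a" using meq by auto
      then obtain k where k: "a = p ^ j * k" by (auto elim: dvdE)
      then have "k < p ^ (n - j)" using a(1) pj by simp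
      then show "a \<in> (\<lambda>k. p ^ j * k) ` {0..<p ^ (n - j)}" using k by auto
    qed
    show "(\<lambda>k. p ^ j * k) ` {0..<p ^ (n - j)} \<subseteq> {a. a < m \<and> p ^ j dvd a}"
      using meq pj by auto
  qed
  moreover have "inj_on (\<lambda>k. p ^ j * k) {0..<p ^ (n - j)}" using pj by (auto simp: inj_on_def)
  ultimately have "card {a. a < m \<and> p ^ j dvd a} = p ^ (n - j)" by (simp add: card_image)
  then show ?thesis by (simp add: card_cartesian_product)
qed

lemma one_A_1: "\<one>\<^bsub>A\<^esub> 1 = 1" using one_A_app[OF m_gt1] .

lemma int_dvd_m: "j \<le> n \<Longrightarrow> int (p ^ j) dvd int m"
  using le_imp_power_dvd by (simp only: int_dvd_int_iff)

lemma K_dvd: assumes "g \<in> K" shows "int p dvd 1 - int (g 1)"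
proof -
  have "[int (g 1) = int 1] (mod int p)" using K_cong1[OF assms] by (simp only: cong_int_iff)
  then have "int p dvd int (g 1) - 1" by (simp add: cong_iff_dvd_diff)
  then show ?thesis by (metis dvd_minus_iff minus_diff_eq)
qed

lemma gen_sub:
  assumes i: "i < n" and L: "L = (if i = 0 then carrier G else S i)"
  shows "(\<Union>h\<in>L. \<Union>g\<in>carrier G. {h \<otimes>\<^bsub>G\<^esub> g \<otimes>\<^bsub>G\<^esub> inv\<^bsub>G\<^esub> h \<otimes>\<^bsub>G\<^esub> inv\<^bsub>G\<^esub> g}) \<subseteq> S (Suc i)"
proof (rule subsetI)
  fix x assume "x \<in> (\<Union>h\<in>L. \<Union>g\<in>carrier G. {h \<otimes>\<^bsub>G\<^esub> g \<otimes>\<^bsub>G\<^esub> inv\<^bsub>G\<^esub> h \<otimes>\<^bsub>G\<^esub> inv\<^bsub>G\<^esub> g})"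
  then obtain h g where hg: "h \<in> L" "g \<in> carrier G"
    "x = h \<otimes>\<^bsub>G\<^esub> g \<otimes>\<^bsub>G\<^esub> inv\<^bsub>G\<^esub> h \<otimes>\<^bsub>G\<^esub> inv\<^bsub>G\<^esub> g" by blast
  have LG: "L \<subseteq> carrier G" using L K_one by (auto simp: carrier_G)
  obtain a f where h: "h = (a, f)" by (cases h)
  obtain b u where g: "g = (b, u)" by (cases g)
  have ab: "a < m" "f \<in> K" "b < m" "u \<in> K" using hg LG by (auto simp: h g carrier_G)
  obtain c where c: "x = (c, \<one>\<^bsub>A\<^esub>)" "c < m"
    "[int c = int a * (1 - int (u 1)) + int b * (int (f 1) - 1)] (mod int m)"
    using comm_cong[OF ab] hg(3) h g by auto
  let ?E = "int a * (1 - int (u 1)) + int b * (int (f 1) - 1)"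
  have d: "int (p ^ Suc i) dvd ?E"
  proof (cases "i = 0")
    case True
    have "int p dvd 1 - int (f 1)" using K_dvd ab by simp
    then have "int p dvd int (f 1) - 1" by (metis dvd_minus_iff minus_diff_eq)
    then show ?thesis using K_dvd[OF ab(4)] True by simp
  next
    case False
    then have "h \<in> S i" using hg L by simp
    then have af: "f = \<one>\<^bsub>A\<^esub>" "p ^ i dvd a" using h by auto
    have "int (p ^ i) * int p dvd int a * (1 - int (u 1))"
      using af K_dvd[OF ab(4)] by (intro mult_dvd_mono) (simp_all only: int_dvd_int_iff)
    then show ?thesis using af one_A_1 by (simp add: power_Suc2 mult.commute)
  qed
  have "[int c = ?E] (mod int (p ^ Suc i))"
    using c(3) int_dvd_m[of "Suc i"] i by (auto intro: cong_dvd_modulus)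
  then have "int (p ^ Suc i) dvd int c" using d by (simp add: cong_dvd_iff)
  then have "p ^ Suc i dvd c" by (simp only: int_dvd_int_iff)
  then show "x \<in> S (Suc i)" using c by simp
qed

lemma gen_sup:
  assumes i: "i < n" and L: "L = (if i = 0 then carrier G else S i)"
  shows "S (Suc i) \<subseteq> (\<Union>h\<in>L. \<Union>g\<in>carrier G. {h \<otimes>\<^bsub>G\<^esub> g \<otimes>\<^bsub>G\<^esub> inv\<^bsub>G\<^esub> h \<otimes>\<^bsub>G\<^esub> inv\<^bsub>G\<^esub> g})"
proof (rule subsetI)
  fix x assume "x \<in> S (Suc i)"
  then obtain t where x: "x = (t, \<one>\<^bsub>A\<^esub>)" "t < m" "p ^ Suc i dvd t" by auto
  then obtain t' where t': "t = p ^ Suc i * t'" by (auto elim: dvdE)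
  obtain g where g: "g \<in> K" "\<not> [g 1 = 1] (mod p ^ 2)" using K_nontriv by blast
  let ?M = "int m"
  let ?v = "int (g 1)"
  have "int p dvd 1 - ?v" using K_dvd[OF g(1)] .
  then obtain w where w: "1 - ?v = int p * w" by (auto elim: dvdE)
  have nw: "\<not> int p dvd w"
  proof
    assume "int p dvd w"
    then have "int p * int p dvd 1 - ?v" using w by simp
    then have "int (p ^ 2) dvd ?v - 1" by (metis dvd_minus_iff minus_diff_eq of_nat_mult power2_eq_square)
    then have "[?v = int 1] (mod int (p ^ 2))" by (simp add: cong_iff_dvd_diff)
    then have "[g 1 = 1] (mod p ^ 2)" by (simp only: cong_int_iff)
    then show False using g(2) by simp
  qed
  have "Factorial_Ring.prime (int p)" using prime by simp
  then have "coprime (int p) w" using nw by (rule prime_imp_coprime)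
  then have "coprime w ?M" by (simp add: coprime_commute)
  then obtain w' where w': "[w * w' = 1] (mod ?M)" using cong_solve_coprime_int by blast
  define s0 where "s0 = (int t' * w') mod ?M"
  have s0: "0 \<le> s0" using m0 by (simp add: s0_def)
  define s where "s = nat s0"
  define a where "a = (p ^ i * s) mod m"
  have alt: "a < m" using m0 by (simp add: a_def)
  have hL: "(a, \<one>\<^bsub>A\<^esub>) \<in> L"
  proof (cases "i = 0")
    case True then show ?thesis using L alt K_one by (simp add: carrier_G)
  next
    case False
    have "p ^ i dvd m" using i by (intro le_imp_power_dvd) simp
    then have "p ^ i dvd a" by (simp add: a_def dvd_mod)
    then show ?thesis using L False alt by simp
  qed
  have gG: "(0, g) \<in> carrier G" using g m0 by (simp add: carrier_G)
  obtain c where c: "(a, \<one>\<^bsub>A\<^esub>) \<otimes>\<^bsub>G\<^esub> (0, g) \<otimes>\<^bsub>G\<^esub> inv\<^bsub>G\<^esub> (a, \<one>\<^bsub>A\<^esub>) \<otimes>\<^bsub>G\<^esub> inv\<^bsub>G\<^esub> (0, g)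
       = (c, \<one>\<^bsub>A\<^esub>)" "c < m"
    "[int c = int a * (1 - ?v) + int 0 * (int (\<one>\<^bsub>A\<^esub> 1) - 1)] (mod ?M)"
    using comm_cong[OF alt K_one m0 g(1)] by blast
  have c1: "[int c = int a * (1 - ?v)] (mod ?M)" using c(3) by simp
  have ia: "[int a = int (p ^ i) * s0] (mod ?M)"
    using s0 by (simp add: a_def s_def cong_def of_nat_mod mod_simps)
  have s0w: "[s0 * w = int t'] (mod ?M)"
  proof -
    have "[s0 = int t' * w'] (mod ?M)" by (simp add: s0_def cong_def)
    then have "[s0 * w = int t' * w' * w] (mod ?M)" by (rule cong_mult) (rule cong_refl)
    moreover have "[int t' * (w * w') = int t' * 1] (mod ?M)"
      using w' by (rule cong_scalar_left)
    ultimately show ?thesis by (simp add: mult.commute mult.left_commute cong_trans)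
  qed
  have "[int a * (1 - ?v) = int (p ^ i) * s0 * (int p * w)] (mod ?M)"
    using ia w by (simp add: cong_mult)
  also have "int (p ^ i) * s0 * (int p * w) = int (p ^ Suc i) * (s0 * w)"
    by (simp add: power_Suc2 algebra_simps)
  also have "[\<dots> = int (p ^ Suc i) * (int t')] (mod ?M)"
    using s0w by (rule cong_scalar_left)
  finally have "[int a * (1 - ?v) = int t] (mod ?M)" using t' by simp
  then have "[int c = int t] (mod ?M)" by (rule cong_trans[OF c1])
  then have "c = t" using c(2) x(2) by (simp add: cong_int_iff cong_def)
  then have "x = (a, \<one>\<^bsub>A\<^esub>) \<otimes>\<^bsub>G\<^esub> (0, g) \<otimes>\<^bsub>G\<^esub> inv\<^bsub>G\<^esub> (a, \<one>\<^bsub>A\<^esub>) \<otimes>\<^bsub>G\<^esub> inv\<^bsub>G\<^esub> (0, g)"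
    using c(1) x(1) by simp
  then show "x \<in> (\<Union>h\<in>L. \<Union>g\<in>carrier G. {h \<otimes>\<^bsub>G\<^esub> g \<otimes>\<^bsub>G\<^esub> inv\<^bsub>G\<^esub> h \<otimes>\<^bsub>G\<^esub> inv\<^bsub>G\<^esub> g})"
    using hL gG by blast
qed

lemma gen_eq:
  assumes i: "i < n" and L: "L = (if i = 0 then carrier G else S i)"
  shows "generate G (\<Union>h\<in>L. \<Union>g\<in>carrier G. {h \<otimes>\<^bsub>G\<^esub> g \<otimes>\<^bsub>G\<^esub> inv\<^bsub>G\<^esub> h \<otimes>\<^bsub>G\<^esub> inv\<^bsub>G\<^esub> g}) = S (Suc i)"
proof
  show "generate G (\<Union>h\<in>L. \<Union>g\<in>carrier G. {h \<otimes>\<^bsub>G\<^esub> g \<otimes>\<^bsub>G\<^esub> inv\<^bsub>G\<^esub> h \<otimes>\<^bsub>G\<^esub> inv\<^bsub>G\<^esub> g}) \<subseteq> S (Suc i)"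
  proof (rule group.generate_subgroup_incl[OF grpG gen_sub[OF i L] S_sub])
    show "Suc i \<le> n" using i by (rule Suc_leI)
  qed
  show "S (Suc i) \<subseteq> generate G (\<Union>h\<in>L. \<Union>g\<in>carrier G. {h \<otimes>\<^bsub>G\<^esub> g \<otimes>\<^bsub>G\<^esub> inv\<^bsub>G\<^esub> h \<otimes>\<^bsub>G\<^esub> inv\<^bsub>G\<^esub> g})"
  proof
    fix x assume "x \<in> S (Suc i)"
    then have "x \<in> (\<Union>h\<in>L. \<Union>g\<in>carrier G. {h \<otimes>\<^bsub>G\<^esub> g \<otimes>\<^bsub>G\<^esub> inv\<^bsub>G\<^esub> h \<otimes>\<^bsub>G\<^esub> inv\<^bsub>G\<^esub> g})"
      using gen_sup[OF i L] by (rule subsetD[rotated])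
    then show "x \<in> generate G (\<Union>h\<in>L. \<Union>g\<in>carrier G. {h \<otimes>\<^bsub>G\<^esub> g \<otimes>\<^bsub>G\<^esub> inv\<^bsub>G\<^esub> h \<otimes>\<^bsub>G\<^esub> inv\<^bsub>G\<^esub> g})"
      by (rule generate.incl)
  qed
qed

lemma lcs_eq: "i < n \<Longrightarrow> lcs G (Suc (Suc i)) = S (Suc i)"
proof (induction i)
  case 0
  have "lcs G (Suc (Suc 0)) = generate G (\<Union>h\<in>carrier G. \<Union>g\<in>carrier G. {h \<otimes>\<^bsub>G\<^esub> g \<otimes>\<^bsub>G\<^esub> inv\<^bsub>G\<^esub> h \<otimes>\<^bsub>G\<^esub> inv\<^bsub>G\<^esub> g})"
    by simp
  also have "\<dots> = S (Suc 0)" using gen_eq[OF 0] by simp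
  finally show ?case .
next
  case (Suc i)
  have "lcs G (Suc (Suc (Suc i))) = generate G (\<Union>h\<in>lcs G (Suc (Suc i)). \<Union>g\<in>carrier G. {h \<otimes>\<^bsub>G\<^esub> g \<otimes>\<^bsub>G\<^esub> inv\<^bsub>G\<^esub> h \<otimes>\<^bsub>G\<^esub> inv\<^bsub>G\<^esub> g})"
    by (simp only: lcs.simps)
  also have "\<dots> = generate G (\<Union>h\<in>S (Suc i). \<Union>g\<in>carrier G. {h \<otimes>\<^bsub>G\<^esub> g \<otimes>\<^bsub>G\<^esub> inv\<^bsub>G\<^esub> h \<otimes>\<^bsub>G\<^esub> inv\<^bsub>G\<^esub> g})"
    using Suc.IH[OF Suc_lessD[OF Suc.prems]] by (simp only:)
  also have "\<dots> = S (Suc (Suc i))" using gen_eq[OF Suc.prems] by simp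
  finally show ?case .
qed

lemma main1: "card (rcosets\<^bsub>G\<^esub> (derived G (carrier G))) = p ^ n"
proof -
  have "derived G (carrier G) = lcs G (Suc (Suc 0))" by (simp add: derived_def)
  also have "\<dots> = S 1" using lcs_eq[of 0] n2 by (simp only: One_nat_def)
  finally have d: "derived G (carrier G) = S 1" .
  have L: "card (rcosets\<^bsub>G\<^esub> (S 1)) * card (S 1) = order G"
    by (rule group.lagrange[OF grpG S_sub]) (use n2 in simp)
  have oG: "order G = p ^ n * p ^ (n - 1)"
    by (simp add: order_def carrier_G card_cartesian_product cardK)
  have cS: "card (S 1) = p ^ (n - 1)" by (rule S_card) (use n2 in simp)
  have nz: "p ^ (n - 1) \<noteq> 0" using p2 by simp
  have "card (rcosets\<^bsub>G\<^esub> (S 1)) * p ^ (n - 1) = p ^ n * p ^ (n - 1)"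
    using L unfolding cS oG .
  then have "card (rcosets\<^bsub>G\<^esub> (S 1)) = p ^ n" by (simp only: mult_right_cancel[OF nz])
  then show ?thesis unfolding d .
qed

lemma main2: assumes i: "i \<in> {2..n}"
  shows "card (rcosets\<^bsub>G\<lparr>carrier := lcs G i\<rparr>\<^esub> (lcs G (Suc i))) = p"
proof -
  have i2: "2 \<le> i" "i \<le> n" using i by auto
  have q1: "i = Suc (Suc (i - 2))" "Suc (i - 2) = i - 1" "i - 2 < n" using i2 by arith+
  have "lcs G i = lcs G (Suc (Suc (i - 2)))" using q1(1) by (rule arg_cong)
  also have "\<dots> = S (Suc (i - 2))" by (rule lcs_eq[OF q1(3)])
  also have "\<dots> = S (i - 1)" by (simp only: q1(2))
  finally have e1: "lcs G i = S (i - 1)" .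
  have q2: "Suc i = Suc (Suc (i - 1))" "Suc (i - 1) = i" "i - 1 < n" using i2 by arith+
  have "lcs G (Suc i) = lcs G (Suc (Suc (i - 1)))" using q2(1) by (rule arg_cong)
  also have "\<dots> = S (Suc (i - 1))" by (rule lcs_eq[OF q2(3)])
  also have "\<dots> = S i" by (simp only: q2(2))
  finally have e2: "lcs G (Suc i) = S i" .
  have sub: "S i \<subseteq> S (i - 1)"
  proof
    fix x assume "x \<in> S i"
    moreover have "p ^ (i - 1) dvd p ^ i" by (simp add: le_imp_power_dvd)
    ultimately show "x \<in> S (i - 1)" using dvd_trans by blast
  qed
  have sg: "subgroup (S i) (G\<lparr>carrier := S (i - 1)\<rparr>)"
    using group.subgroup_incl[OF grpG S_sub S_sub sub] i2 by simp
  have gH: "group (G\<lparr>carrier := S (i - 1)\<rparr>)"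
    using group.subgroup_imp_group[OF grpG S_sub] i2 by simp
  have L: "card (rcosets\<^bsub>G\<lparr>carrier := S (i - 1)\<rparr>\<^esub> (S i)) * card (S i) = order (G\<lparr>carrier := S (i - 1)\<rparr>)"
    by (rule group.lagrange[OF gH sg])
  have oH: "order (G\<lparr>carrier := S (i - 1)\<rparr>) = p ^ (n - (i - 1))"
    using S_card[of "i - 1"] i2 by (simp add: order_def)
  have cS: "card (S i) = p ^ (n - i)" using S_card i2 by simp
  have pw: "p ^ (n - (i - 1)) = p * p ^ (n - i)"
  proof -
    have "n - (i - 1) = Suc (n - i)" using i2 by arith
    then show ?thesis by simp
  qed
  have pos: "p ^ (n - i) > 0" using p2 by simp
  have "card (rcosets\<^bsub>G\<lparr>carrier := S (i - 1)\<rparr>\<^esub> (S i)) * p ^ (n - i) = p * p ^ (n - i)"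
    using L unfolding cS oH pw .
  moreover have nz: "p ^ (n - i) \<noteq> 0" using pos by (rule gr_implies_not0)
  ultimately have "card (rcosets\<^bsub>G\<lparr>carrier := S (i - 1)\<rparr>\<^esub> (S i)) = p"
    by (simp only: mult_right_cancel[OF nz])
  then show ?thesis unfolding e1 e2 .
qed

end

theorem lemma2p7:
  fixes p n :: nat and K :: "(nat \<Rightarrow> nat) set"
  assumes "Factorial_Ring.prime p" and "n \<ge> 2"
    and "subgroup K (AutoGroup (Zcyc (p ^ n)))"
    and "card K = p ^ multiplicity p (order (AutoGroup (Zcyc (p ^ n))))"
  defines "G \<equiv> sdprod (Zcyc (p ^ n)) ((AutoGroup (Zcyc (p ^ n)))\<lparr>carrier := K\<rparr>)"
  shows "card (rcosets\<^bsub>G\<^esub> (derived G (carrier G))) = p ^ n \<and>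
         (\<forall>i \<in> {2..n}. card (rcosets\<^bsub>G\<lparr>carrier := lcs G i\<rparr>\<^esub> (lcs G (Suc i))) = p)"
proof -
  interpret LS p n K by (rule LS.intro[OF assms(1-4)])
  show ?thesis unfolding G_def using main1 main2 by blast
qed


end
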